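(* For $A \in \mathbf{DLat}$ and any regular cardinal $\kappa$, (1) $A\in\kappa\mathbf{H}$ if and only if $\mathrm{p}\mathcal{H} A \subseteq \mathcal{BL}_\kappa A$; (2) $A\in\mathbf{pro}\kappa\mathbf{H}$ if and only if $\mathrm{p}\mathcal{H} A \subseteq \mathcal{BL}_\kappa A \cap \mathcal{DM} A$.
   Context: $\mathbf{DLat}$ is the class of bounded distributive lattices. For $A\in\mathbf{DLat}$: $\mathcal{DM} A$ is the Dedekind-MacNeille completion (normal ideals $N=N^{u\ell}$); a join $\bigvee S$ existing in $A$ is distributive if $a\wedge\bigvee S=\bigvee\{a\wedge s: s\in S\}$ for all $a\in A$; $\mathcal{BL} A$ (the Bruns-Lakser completion) is the frame of D-ideals of $A$ (downsets closed under distributive joins of their subsets); $A$ is identified with its principal downsets, so $A\subseteq\mathcal{DM} A\subseteq\mathcal{BL} A$. For a regular cardinal $\kappa$, a $\kappa$-frame is a lattice in which all joins of sets of cardinality $<\kappa$ exist and are distributive, and $\mathcal{BL}_\kappa A$ is the sub-$\kappa$-frame of $\mathcal{BL} A$ generated by $A$. A relative annihilator is $\langle a,b\rangle=\{x\in A: a\wedge x\le b\}$, and $\mathcal{R} A$ is the set of relative annihilators. The proHeyting extension $\mathrm{p}\mathcal{H} A$ is the bounded sublattice of $\mathcal{BL} A$ generated by $\mathcal{R} A$. $A\in\kappa\mathbf{H}$ means $\mathcal{R} A\subseteq\mathcal{BL}_\kappa A$; $A\in\mathbf{pro}\kappa\mathbf{H}$ means $\mathcal{R} A\subseteq\mathcal{BL}_\kappa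 A\cap\mathcal{DM} A$. $A$ is proHeyting if $\mathcal{R} A\subseteq\mathcal{DM} A$, equivalently $\mathcal{DM} A=\mathcal{BL} A$. *)

theory Defs
  imports Main
begin

text \<open>A bounded distributive lattice A is modelled as a type of class
  distrib_lattice and bounded_lattice. Subsets of A are downsets etc.;
  A is identified with its principal downsets.\<close>

definition is_lub :: "'a::order set \<Rightarrow> 'a \<Rightarrow> bool" where
  "is_lub S j \<longleftrightarrow> (\<forall>s\<in>S. s \<le> j) \<and> (\<forall>u. (\<forall>s\<in>S. s \<le> u) \<longrightarrow> j \<le> u)"

definition dist_join :: "'a::distrib_lattice set \<Rightarrow> 'a \<Rightarrow> bool" where
  "dist_join S j \<longleftrightarrow> is_lub S j \<and> (\<forall>a. is_lub ((\<lambda>s. inf a s) ` S) (inf a j))"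

definition principal :: "'a::order \<Rightarrow> 'a set" where
  "principal a = {x. x \<le> a}"

definition D_ideal :: "'a::distrib_lattice set \<Rightarrow> bool" where
  "D_ideal I \<longleftrightarrow> (\<forall>x y. x \<in> I \<longrightarrow> y \<le> x \<longrightarrow> y \<in> I)
      \<and> (\<forall>S j. S \<subseteq> I \<longrightarrow> dist_join S j \<longrightarrow> j \<in> I)"

definition BL :: "'a::{distrib_lattice,bounded_lattice} set set" where
  "BL = {I. D_ideal I}"

definition BL_join :: "'a::{distrib_lattice,bounded_lattice} set set \<Rightarrow> 'a set" where
  "BL_join F = \<Inter>{I. D_ideal I \<and> \<Union>F \<subseteq> I}"

definition upper_bds :: "'a::order set \<Rightarrow> 'a set" where
  "upper_bds N = {u. \<forall>x\<in>N. x \<le> u}"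

definition lower_bds :: "'a::order set \<Rightarrow> 'a set" where
  "lower_bds U = {l. \<forall>u\<in>U. l \<le> u}"

definition DM :: "'a::{distrib_lattice,bounded_lattice} set set" where
  "DM = {N. N = lower_bds (upper_bds N)}"

inductive_set BL_kappa :: "'b rel \<Rightarrow> 'a::{distrib_lattice,bounded_lattice} set set"
  for \<kappa> :: "'b rel" where
  gen: "principal a \<in> BL_kappa \<kappa>"
| top: "UNIV \<in> BL_kappa \<kappa>"
| meet: "I \<in> BL_kappa \<kappa> \<Longrightarrow> J \<in> BL_kappa \<kappa> \<Longrightarrow> I \<inter> J \<in> BL_kappa \<kappa>"
| join: "(\<forall>I\<in>F. I \<in> BL_kappa \<kappa>) \<Longrightarrow> (card_of F, \<kappa>) \<in> ordLess \<Longrightarrow> BL_join F \<in> BL_kappa \<kappa>"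

definition rel_ann :: "'a::{distrib_lattice,bounded_lattice} \<Rightarrow> 'a \<Rightarrow> 'a set" where
  "rel_ann a b = {x. inf a x \<le> b}"

definition RA :: "'a::{distrib_lattice,bounded_lattice} set set" where
  "RA = {rel_ann a b | a b. True}"

inductive_set pH :: "'a::{distrib_lattice,bounded_lattice} set set" where
  gen: "R \<in> RA \<Longrightarrow> R \<in> pH"
| top: "UNIV \<in> pH"
| bot: "BL_join {} \<in> pH"
| meet: "I \<in> pH \<Longrightarrow> J \<in> pH \<Longrightarrow> I \<inter> J \<in> pH"
| join: "I \<in> pH \<Longrightarrow> J \<in> pH \<Longrightarrow> BL_join {I, J} \<in> pH"

definition kappaH :: "'b rel \<Rightarrow> 'a::{distrib_lattice,bounded_lattice} itself \<Rightarrow> bool" where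
  "kappaH \<kappa> _ \<longleftrightarrow> (RA :: 'a set set) \<subseteq> BL_kappa \<kappa>"

definition pro_kappaH :: "'b rel \<Rightarrow> 'a::{distrib_lattice,bounded_lattice} itself \<Rightarrow> bool" where
  "pro_kappaH \<kappa> _ \<longleftrightarrow> (RA :: 'a set set) \<subseteq> BL_kappa \<kappa> \<inter> DM"

end

theory Submission
  imports Defs
begin

lemma fin_less:
  assumes "Cinfinite \<kappa>" "finite F"
  shows "(card_of F, \<kappa>) \<in> ordLess"
  using Cfinite_ordLess_Cinfinite[of "card_of F" \<kappa>] assms
  by (auto simp: cfinite_def card_of_card_order_on Field_card_of)

lemma RA_pH: "RA \<subseteq> pH"
  by (auto intro: pH.gen)

lemma pH_BLk:
  assumes "Cinfinite \<kappa>" "(RA :: 'a::{distrib_lattice,bounded_lattice} set set) \<subseteq> BL_kappa \<kappa>"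
  shows "(pH :: 'a set set) \<subseteq> BL_kappa \<kappa>"
proof
  fix I :: "'a set" assume "I \<in> pH"
  then show "I \<in> BL_kappa \<kappa>"
  proof induct
    case (gen R) then show ?case using assms(2) by blast
  next
    case top then show ?case by (rule BL_kappa.top)
  next
    case bot then show ?case
      by (rule BL_kappa.join) (auto intro: fin_less[OF assms(1)])
  next
    case (meet I J) then show ?case by (simp add: BL_kappa.meet)
  next
    case (join I J) then show ?case
      by (intro BL_kappa.join) (auto intro: fin_less[OF assms(1)])
  qed
qed

lemma D_downI: "D_ideal I \<Longrightarrow> x \<in> I \<Longrightarrow> y \<le> x \<Longrightarrow> y \<in> I"
  unfolding D_ideal_def by blast
lemma D_joinI: "D_ideal I \<Longrightarrow> S \<subseteq> I \<Longrightarrow> dist_join S j \<Longrightarrow> j \<in> I"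
  unfolding D_ideal_def by blast
lemma D_idealI: "(\<And>x y. x \<in> I \<Longrightarrow> y \<le> x \<Longrightarrow> y \<in> I) \<Longrightarrow> (\<And>S j. S \<subseteq> I \<Longrightarrow> dist_join S j \<Longrightarrow> j \<in> I) \<Longrightarrow> D_ideal I"
  unfolding D_ideal_def by blast

lemma D_ideal_Inter:
  assumes F: "\<forall>I\<in>F. D_ideal I" shows "D_ideal (\<Inter>F)"
proof (rule D_idealI)
  fix x y assume x: "x \<in> \<Inter>F" and "y \<le> x"
  show "y \<in> \<Inter>F"
  proof
    fix I assume "I \<in> F"
    then have "D_ideal I" "x \<in> I" using F x by auto
    then show "y \<in> I" using \<open>y \<le> x\<close> by (metis D_downI D_joinI)
  qed
next
  fix S j assume S: "S \<subseteq> \<Inter>F" and h: "dist_join S j"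
  show "j \<in> \<Inter>F"
  proof
    fix I assume "I \<in> F"
    then have "D_ideal I" "S \<subseteq> I" using F S by auto
    then show "j \<in> I" using h by (metis D_downI D_joinI)
  qed
qed

lemma D_ideal_rel_ann: "D_ideal (rel_ann a b)"
proof (rule D_idealI)
  fix x y :: 'a assume "x \<in> rel_ann a b" "y \<le> x"
  then show "y \<in> rel_ann a b" unfolding rel_ann_def
    by (simp, meson inf_mono order_refl order_trans)
next
  fix S j assume S: "S \<subseteq> rel_ann a b" and h: "dist_join S j"
  then have "is_lub ((\<lambda>s. inf a s) ` S) (inf a j)" unfolding dist_join_def by blast
  then have "\<forall>u. (\<forall>s\<in>(\<lambda>s. inf a s) ` S. s \<le> u) \<longrightarrow> inf a j \<le> u"
    unfolding is_lub_def by blast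
  moreover have "\<forall>s\<in>(\<lambda>s. inf a s) ` S. s \<le> b" using S unfolding rel_ann_def by auto
  ultimately have "inf a j \<le> b" by blast
  then show "j \<in> rel_ann a b" unfolding rel_ann_def by simp
qed

lemma pH_D_ideal: "I \<in> pH \<Longrightarrow> D_ideal I"
proof (induct rule: pH.induct)
  case (gen R)
  then obtain a b where "R = rel_ann a b" unfolding RA_def by blast
  then show ?case using D_ideal_rel_ann by simp
next
  case top then show ?case by (rule D_idealI) simp_all
next
  case bot then show ?case unfolding BL_join_def by (intro D_ideal_Inter ballI) (drule CollectD, erule conjunct1)
next
  case (meet I J)
  show ?case
  proof (rule D_idealI)
    fix x y assume "x \<in> I \<inter> J" "y \<le> x"
    then have "x \<in> I" "x \<in> J" by auto
    then have "y \<in> I" "y \<in> J" using meet(2,4) \<open>y \<le> x\<close> by (metis D_downI D_joinI)+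
    then show "y \<in> I \<inter> J" by blast
  next
    fix S j assume "S \<subseteq> I \<inter> J" "dist_join S j"
    then have "S \<subseteq> I" "S \<subseteq> J" "dist_join S j" by auto
    then have "j \<in> I" "j \<in> J" using meet(2,4) by (metis D_downI D_joinI)+
    then show "j \<in> I \<inter> J" by blast
  qed
next
  case (join I J) then show ?case unfolding BL_join_def by (intro D_ideal_Inter ballI) (drule CollectD, erule conjunct1)
qed

lemma rel_ann_RA: "rel_ann c u \<in> RA"
  unfolding RA_def by blast

lemma is_lubI:
  assumes "\<And>s. s \<in> S \<Longrightarrow> s \<le> j" "\<And>u. (\<And>s. s \<in> S \<Longrightarrow> s \<le> u) \<Longrightarrow> j \<le> u"
  shows "is_lub S j"
  using assms unfolding is_lub_def by blast

lemma D_ideal_DM: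
  assumes RA: "(RA :: 'a::{distrib_lattice,bounded_lattice} set set) \<subseteq> DM"
    and I: "D_ideal (I :: 'a set)"
  shows "I \<in> DM"
proof -
  have key: "x \<in> rel_ann c u" if sub: "I \<subseteq> rel_ann c u" and x: "x \<in> lower_bds (upper_bds I)" for c u x
  proof -
    have "rel_ann c u \<in> DM" by (rule subsetD[OF RA rel_ann_RA])
    then have eq: "rel_ann c u = lower_bds (upper_bds (rel_ann c u))" unfolding DM_def by simp
    have "upper_bds (rel_ann c u) \<subseteq> upper_bds I" using sub unfolding upper_bds_def by auto
    then have "lower_bds (upper_bds I) \<subseteq> lower_bds (upper_bds (rel_ann c u))"
      unfolding lower_bds_def by auto
    then have "x \<in> lower_bds (upper_bds (rel_ann c u))" using x by (rule subsetD)
    then show ?thesis using eq by simp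
  qed
  have "lower_bds (upper_bds I) \<subseteq> I"
  proof
    fix x assume x: "x \<in> lower_bds (upper_bds I)"
    let ?S = "inf x ` I"
    have SI: "?S \<subseteq> I"
    proof
      fix s assume "s \<in> ?S"
      then obtain i where i: "i \<in> I" "s = inf x i" by blast
      have "inf x i \<le> i" by simp
      then show "s \<in> I" using D_downI[OF I i(1)] i(2) by simp
    qed
    have lub: "is_lub ?S x"
    proof (rule is_lubI)
      fix s assume "s \<in> ?S" then show "s \<le> x" by auto
    next
      fix u assume h: "\<And>s. s \<in> ?S \<Longrightarrow> s \<le> u"
      have "I \<subseteq> rel_ann x u" using h unfolding rel_ann_def by auto
      then have "x \<in> rel_ann x u" using x by (rule key)
      then show "x \<le> u" unfolding rel_ann_def by simp
    qed
    have dl: "is_lub (inf a ` ?S) (inf a x)" for a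
    proof (rule is_lubI)
      fix s assume "s \<in> inf a ` ?S" then show "s \<le> inf a x" by (auto simp: le_infI2)
    next
      fix u assume h: "\<And>s. s \<in> inf a ` ?S \<Longrightarrow> s \<le> u"
      have "I \<subseteq> rel_ann (inf a x) u"
      proof
        fix i assume "i \<in> I"
        then have "inf a (inf x i) \<le> u" using h by blast
        then show "i \<in> rel_ann (inf a x) u" unfolding rel_ann_def by (simp add: inf_assoc)
      qed
      then have "x \<in> rel_ann (inf a x) u" using x by (rule key)
      then show "inf a x \<le> u" unfolding rel_ann_def by (simp add: inf_assoc)
    qed
    have "dist_join ?S x" unfolding dist_join_def using lub dl by blast
    then show "x \<in> I" using D_joinI[OF I SI] by simp
  qed
  moreover have "I \<subseteq> lower_bds (upper_bds I)"
    unfolding lower_bds_def upper_bds_def by blast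
  ultimately have "I = lower_bds (upper_bds I)" by (rule antisym[rotated])
  then show ?thesis unfolding DM_def by simp
qed

theorem theorem4p23:
  fixes \<kappa> :: "'b rel"
  assumes "Cinfinite \<kappa>" and "regularCard \<kappa>"
  shows "(kappaH \<kappa> TYPE('a::{distrib_lattice,bounded_lattice})
            \<longleftrightarrow> (pH :: 'a set set) \<subseteq> BL_kappa \<kappa>)
       \<and> (pro_kappaH \<kappa> TYPE('a)
            \<longleftrightarrow> (pH :: 'a set set) \<subseteq> BL_kappa \<kappa> \<inter> DM)"
proof (intro conjI iffI)
  assume "kappaH \<kappa> TYPE('a)"
  then show "(pH :: 'a set set) \<subseteq> BL_kappa \<kappa>"
    using pH_BLk[OF assms(1)] unfolding kappaH_def by blast
next
  assume "(pH :: 'a set set) \<subseteq> BL_kappa \<kappa>"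
  then show "kappaH \<kappa> TYPE('a)" using RA_pH unfolding kappaH_def by blast
next
  assume h: "pro_kappaH \<kappa> TYPE('a)"
  then have "(pH :: 'a set set) \<subseteq> BL_kappa \<kappa>"
    using pH_BLk[OF assms(1)] unfolding pro_kappaH_def by blast
  moreover have "(pH :: 'a set set) \<subseteq> DM"
    using h D_ideal_DM pH_D_ideal unfolding pro_kappaH_def by blast
  ultimately show "(pH :: 'a set set) \<subseteq> BL_kappa \<kappa> \<inter> DM" by blast
next
  assume "(pH :: 'a set set) \<subseteq> BL_kappa \<kappa> \<inter> DM"
  then show "pro_kappaH \<kappa> TYPE('a)" using RA_pH unfolding pro_kappaH_def by blast
qed

end
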